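(* Let $\mathcal{A}$ be a separating union-closed family with base set $[n]$ and height $h\le 3$. Then $\mathrm{Avg}(\mathcal{A})=\frac{1}{|\mathcal{A}|}\sum_{A\in\mathcal{A}}|A| \geq \frac{n}{2}$.
   Context: A family of sets $\mathcal{A}$ is union-closed if it is a finite family of distinct finite sets with at least one nonempty member set, and $X,Y\in\mathcal{A}$ implies $X\cup Y\in\mathcal{A}$ (the empty set may be a member). The base set $\bigcup_{A\in\mathcal{A}}A$ is denoted $[n]=\{1,\dots,n\}$. $\mathcal{A}$ is separating if for any two distinct $x,y\in[n]$ there is $A\in\mathcal{A}$ containing exactly one of $x,y$. A chain in $\mathcal{A}$ is a subfamily any two distinct members of which are comparable under proper inclusion; the height $h$ of $\mathcal{A}$ is the maximum size of a chain in $\mathcal{A}$. *)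

theory Defs
  imports Complex_Main
begin

definition union_closed :: "'a set set \<Rightarrow> bool" where
  "union_closed \<A> \<longleftrightarrow> finite \<A> \<and> (\<forall>A\<in>\<A>. finite A) \<and> (\<exists>A\<in>\<A>. A \<noteq> {})
     \<and> (\<forall>X\<in>\<A>. \<forall>Y\<in>\<A>. X \<union> Y \<in> \<A>)"

definition separating :: "'a set set \<Rightarrow> bool" where
  "separating \<A> \<longleftrightarrow> (\<forall>x\<in>\<Union>\<A>. \<forall>y\<in>\<Union>\<A>. x \<noteq> y \<longrightarrow>
     (\<exists>A\<in>\<A>. (x \<in> A \<and> y \<notin> A) \<or> (y \<in> A \<and> x \<notin> A)))"

definition is_chain_in :: "'a set set \<Rightarrow> 'a set set \<Rightarrow> bool" where
  "is_chain_in \<C> \<A> \<longleftrightarrow> \<C> \<subseteq> \<A> \<and>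
     (\<forall>X\<in>\<C>. \<forall>Y\<in>\<C>. X \<noteq> Y \<longrightarrow> X \<subset> Y \<or> Y \<subset> X)"

definition height :: "'a set set \<Rightarrow> nat" where
  "height \<A> = Max (card ` {\<C>. is_chain_in \<C> \<A>})"

end

theory Submission
  imports Defs
begin

lemma uc_union_in:
  assumes "union_closed \<A>"
  shows "\<Union>\<A> \<in> \<A>"
proof -
  have fin: "finite \<A>" and ne: "\<A> \<noteq> {}" and cl: "\<forall>X\<in>\<A>. \<forall>Y\<in>\<A>. X \<union> Y \<in> \<A>"
    using assms unfolding union_closed_def by auto
  have "\<And>F. finite F \<Longrightarrow> F \<noteq> {} \<Longrightarrow> F \<subseteq> \<A> \<Longrightarrow> \<Union>F \<in> \<A>"
  proof -
    fix F :: "'a set set"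
    assume "finite F" "F \<noteq> {}" "F \<subseteq> \<A>"
    then show "\<Union>F \<in> \<A>"
    proof (induction F rule: finite_ne_induct)
      case (singleton x) then show ?case by simp
    next
      case (insert x F) then show ?case using cl by auto
    qed
  qed
  then show ?thesis using fin ne by blast
qed

lemma no_chain4:
  assumes "height \<A> \<le> 3" "finite \<A>"
    and "A1 \<in> \<A>" "A2 \<in> \<A>" "A3 \<in> \<A>" "A4 \<in> \<A>"
    and "A1 \<subset> A2" "A2 \<subset> A3" "A3 \<subset> A4"
  shows False
proof -
  let ?C = "{A1, A2, A3, A4}"
  have ch: "is_chain_in ?C \<A>"
    unfolding is_chain_in_def using assms by auto
  have d: "A1 \<noteq> A2" "A1 \<noteq> A3" "A1 \<noteq> A4" "A2 \<noteq> A3" "A2 \<noteq> A4" "A3 \<noteq> A4"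
    using assms(7,8,9) by auto
  have c4: "card ?C = 4"
    using d by simp
  have fin: "finite (card ` {\<C>. is_chain_in \<C> \<A>})"
  proof -
    have "{\<C>. is_chain_in \<C> \<A>} \<subseteq> Pow \<A>" unfolding is_chain_in_def by auto
    then show ?thesis using assms(2) by (meson finite_Pow_iff finite_imageI finite_subset)
  qed
  have "card ?C \<le> height \<A>"
    unfolding height_def using fin ch by (intro Max_ge) auto
  then show False using c4 assms(1) by simp
qed

lemma key:
  assumes uc: "union_closed \<A>" and sep: "separating \<A>" and h: "height \<A> \<le> 3"
    and A: "A \<in> \<A>" and B: "B \<in> \<A>" and AB: "A \<noteq> B"
    and AU: "A \<noteq> \<Union>\<A>" and BU: "B \<noteq> \<Union>\<A>"
  shows "card (\<Union>\<A> - (A \<union> B)) \<le> 1"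
proof (rule ccontr)
  let ?U = "\<Union>\<A>"
  have fin: "finite \<A>" and cl: "\<forall>X\<in>\<A>. \<forall>Y\<in>\<A>. X \<union> Y \<in> \<A>"
    and finm: "\<forall>A\<in>\<A>. finite A"
    using uc unfolding union_closed_def by auto
  have Uin: "?U \<in> \<A>" using uc_union_in[OF uc] .
  define C where "C = A \<union> B"
  have Cin: "C \<in> \<A>" using cl A B C_def by auto
  assume "\<not> card (?U - (A \<union> B)) \<le> 1"
  then have c2: "card (?U - C) \<ge> 2" unfolding C_def by simp
  have finU: "finite (?U - C)" using fin finm by auto
  have "\<not> (\<forall>x\<in>?U - C. \<forall>y\<in>?U - C. x = y)"
    using c2 card_le_Suc0_iff_eq[OF finU] by auto
  then obtain x y where xy: "x \<in> ?U - C" "y \<in> ?U - C" "x \<noteq> y"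
    by blast
  have CU: "C \<subset> ?U" using xy Cin by auto
  obtain E where E: "E \<in> \<A>" "E \<subset> C"
  proof (cases "A = C")
    case True
    then have "B \<subset> C" using AB C_def by auto
    then show ?thesis using that B by blast
  next
    case False
    then have "A \<subset> C" using C_def by auto
    then show ?thesis using that A by blast
  qed
  have "\<exists>D\<in>\<A>. \<exists>u v. u \<in> ?U - C \<and> v \<in> ?U - C \<and> u \<in> D \<and> v \<notin> D"
    using sep xy unfolding separating_def by (metis DiffD1)
  then obtain D u v where D: "D \<in> \<A>" "u \<in> ?U - C" "v \<in> ?U - C" "u \<in> D" "v \<notin> D"
    by blast
  have DC: "C \<union> D \<in> \<A>" using cl Cin D by auto
  have "C \<subset> C \<union> D" using D by auto
  moreover have "C \<union> D \<subset> ?U" using D Cin by auto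
  ultimately show False
    using no_chain4[OF h fin E(1) Cin DC Uin E(2)] by blast
qed

theorem theorem1p4:
  fixes \<A> :: "nat set set" and n :: nat
  assumes "union_closed \<A>"
    and "\<Union>\<A> = {1..n}"
    and "separating \<A>"
    and "height \<A> \<le> 3"
  shows "(\<Sum>A\<in>\<A>. real (card A)) / real (card \<A>) \<ge> real n / 2"
proof -
  let ?U = "\<Union>\<A>"
  have fin: "finite \<A>" using assms(1) unfolding union_closed_def by auto
  have Uin: "?U \<in> \<A>" using uc_union_in[OF assms(1)] .
  have cU: "card ?U = n" using assms(2) by simp
  have finU: "finite ?U" using assms(2) by simp
  have sub: "\<And>A. A \<in> \<A> \<Longrightarrow> A \<subseteq> ?U" by auto
  have cardA: "\<And>A. A \<in> \<A> \<Longrightarrow> card A \<le> n" using sub cU finU card_mono by metis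
  define w where "w (A::nat set) = int n - 2 * int (card A)" for A
  have pair: "w A + w B \<le> 2" if "A \<in> \<A>" "B \<in> \<A>" "A \<noteq> B" "A \<noteq> ?U" "B \<noteq> ?U" for A B
  proof -
    have k: "card (?U - (A \<union> B)) \<le> 1"
      using key[OF assms(1,3,4) that] .
    have e: "?U - (A \<union> B) = (?U - A) \<inter> (?U - B)" by auto
    have "card ((?U - A) \<union> (?U - B)) \<le> n"
      using cU finU by (metis Diff_subset Un_least card_mono)
    moreover have "card ((?U - A) \<union> (?U - B)) + card ((?U - A) \<inter> (?U - B)) = card (?U - A) + card (?U - B)"
      using card_Un_Int[of "?U - A" "?U - B"] finU by simp
    moreover have "card (?U - A) = n - card A"
      using card_Diff_subset[OF finite_subset[OF sub[OF that(1)] finU] sub[OF that(1)]] cU by simp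
    moreover have "card (?U - B) = n - card B"
      using card_Diff_subset[OF finite_subset[OF sub[OF that(2)] finU] sub[OF that(2)]] cU by simp
    moreover have "card ((?U - A) \<inter> (?U - B)) \<le> 1" using k e by simp
    ultimately show ?thesis using cardA[OF that(1)] cardA[OF that(2)]
      unfolding w_def by linarith
  qed
  define P where "P = {A \<in> \<A> - {?U}. w A > 0}"
  have finP: "finite P" using fin P_def by auto
  have "(\<Sum>A\<in>\<A> - {?U}. w A) = (\<Sum>A\<in>P. w A) + (\<Sum>A\<in>(\<A> - {?U}) - P. w A)"
  proof -
    have "P \<subseteq> \<A> - {?U}" using P_def by auto
    then show ?thesis using sum.subset_diff[of P "\<A> - {?U}" w] fin by (simp add: add.commute)
  qed
  moreover have "(\<Sum>A\<in>(\<A> - {?U}) - P. w A) \<le> 0"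
    by (intro sum_nonpos) (auto simp: P_def)
  ultimately have s1: "(\<Sum>A\<in>\<A> - {?U}. w A) \<le> (\<Sum>A\<in>P. w A)" by linarith
  have s2: "(\<Sum>A\<in>P. w A) \<le> int n"
  proof (cases "card P \<le> 1")
    case True
    then show ?thesis
    proof (cases "P = {}")
      case False
      then obtain A where "A \<in> P" by blast
      moreover have "\<forall>x\<in>P. \<forall>y\<in>P. x = y" using True card_le_Suc0_iff_eq[OF finP] by simp
      ultimately have "P = {A}" by blast
      then show ?thesis unfolding w_def by simp
    qed simp
  next
    case False
    have w1: "w A = 1" if "A \<in> P" for A
    proof -
      have "\<exists>x\<in>P. \<exists>y\<in>P. x \<noteq> y" using False card_le_Suc0_iff_eq[OF finP] by auto
      then obtain B where "B \<in> P" "B \<noteq> A" by blast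
      then show ?thesis using pair[of A B] that unfolding P_def by auto
    qed
    then have sP: "(\<Sum>A\<in>P. w A) = int (card P)" by simp
    obtain A0 where A0: "A0 \<in> P" using False by fastforce
    have odd: "2 * card A0 + 1 = n" using w1[OF A0] unfolding w_def by linarith
    define s where "s = n - card A0"
    have cP: "\<forall>A\<in>P. card (?U - A) = s"
    proof
      fix A assume "A \<in> P"
      have "w A = 1" using w1 \<open>A \<in> P\<close> by blast
      moreover have "A \<in> \<A>" using \<open>A \<in> P\<close> unfolding P_def by blast
      ultimately have "w A = 1" "A \<in> \<A>" by simp_all
      then have "card A = card A0" using odd unfolding w_def by linarith
      then show "card (?U - A) = s" unfolding s_def
        using card_Diff_subset[OF finite_subset[OF sub[OF \<open>A \<in> \<A>\<close>] finU] sub[OF \<open>A \<in> \<A>\<close>]] cU by simp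
    qed
    have inj: "inj_on (\<lambda>A. ?U - A) P"
    proof (rule inj_onI)
      fix X Y assume XY: "X \<in> P" "Y \<in> P" "?U - X = ?U - Y"
      then have "X \<subseteq> ?U" "Y \<subseteq> ?U" using sub P_def by simp_all
      then show "X = Y" using XY(3) by blast
    qed
    have "(\<lambda>A. ?U - A) ` P \<subseteq> {K. K \<subseteq> ?U \<and> card K = s}" using cP by auto
    then have "card ((\<lambda>A. ?U - A) ` P) \<le> card {K. K \<subseteq> ?U \<and> card K = s}"
      using finU by (intro card_mono) auto
    then have cb: "card P \<le> n choose s"
      using card_image[OF inj] n_subsets[OF finU, of s] cU by simp
    have "card P \<le> n"
    proof (cases "n \<le> 3")
      case True
      then have "n = 1 \<or> n = 3" using odd by presburger
      then show ?thesis
      proof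
        assume "n = 1" then have "s = 1" using odd s_def by simp
        then show ?thesis using cb \<open>n = 1\<close> by simp
      next
        assume "n = 3" then have "s = 2" using odd s_def by simp
        then show ?thesis using cb \<open>n = 3\<close> by (simp add: choose_two)
      qed
    next
      case n4: False
      show ?thesis
      proof (rule ccontr)
        assume "\<not> card P \<le> n"
        then have "card P \<ge> 3" using n4 by simp
        obtain A where A: "A \<in> P" using A0 by blast
        have "card (P - {A}) \<ge> 2" using \<open>card P \<ge> 3\<close> A finP by (simp add: card_Diff_singleton)
        then have "P - {A} \<noteq> {}" by (cases "P - {A} = {}") simp_all
        then obtain B where B: "B \<in> P" "B \<noteq> A" by blast
        have "card (P - {A, B}) \<ge> 1" using \<open>card P \<ge> 3\<close> A B finP
          by (simp add: card_Diff_subset)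
        then have "P - {A, B} \<noteq> {}" by (cases "P - {A, B} = {}") simp_all
        then obtain C where C: "C \<in> P" "C \<noteq> A" "C \<noteq> B" by blast
        have inA: "X \<in> \<A>" "X \<noteq> ?U" if "X \<in> P" for X using that P_def by auto
        have kab: "card ((?U - A) \<inter> (?U - B)) \<le> 1"
          using key[OF assms(1,3,4) inA(1)[OF A] inA(1)[OF B(1)] B(2)[symmetric] inA(2)[OF A] inA(2)[OF B(1)]]
          by (metis Diff_Un)
        have kac: "card ((?U - A) \<inter> (?U - C)) \<le> 1"
          using key[OF assms(1,3,4) inA(1)[OF A] inA(1)[OF C(1)] C(2)[symmetric] inA(2)[OF A] inA(2)[OF C(1)]]
          by (metis Diff_Un)
        have kbc: "card ((?U - B) \<inter> (?U - C)) \<le> 1"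
          using key[OF assms(1,3,4) inA(1)[OF B(1)] inA(1)[OF C(1)] C(3)[symmetric] inA(2)[OF B(1)] inA(2)[OF C(1)]]
          by (metis Diff_Un)
        let ?KA = "?U - A" and ?KB = "?U - B" and ?KC = "?U - C"
        have fK: "finite ?KA" "finite ?KB" "finite ?KC" using finU by auto
        have e1: "card (?KA \<union> ?KB) + card (?KA \<inter> ?KB) = card ?KA + card ?KB"
          using card_Un_Int[of ?KA ?KB] fK by simp
        have e2: "card (?KA \<union> ?KB \<union> ?KC) + card ((?KA \<union> ?KB) \<inter> ?KC) = card (?KA \<union> ?KB) + card ?KC"
          using card_Un_Int[of "?KA \<union> ?KB" ?KC] fK by simp
        have "(?KA \<union> ?KB) \<inter> ?KC = (?KA \<inter> ?KC) \<union> (?KB \<inter> ?KC)" by blast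
        then have e3: "card ((?KA \<union> ?KB) \<inter> ?KC) \<le> 2"
          using card_Un_le[of "?KA \<inter> ?KC" "?KB \<inter> ?KC"] kac kbc by simp
        have e4: "card (?KA \<union> ?KB \<union> ?KC) \<le> n"
          using cU finU by (metis Diff_subset Un_least card_mono)
        have "card ?KA = s" "card ?KB = s" "card ?KC = s" using cP A B C by auto
        moreover have "2 * s = n + 1" using odd s_def by simp
        ultimately show False using e1 e2 e3 e4 kab n4 by linarith
      qed
    qed
    then show ?thesis using sP by simp
  qed
  have wU: "w ?U = - int n" unfolding w_def using cU by simp
  have "(\<Sum>A\<in>\<A>. w A) = w ?U + (\<Sum>A\<in>\<A> - {?U}. w A)"
    using fin Uin by (simp add: sum.remove)
  then have tot: "(\<Sum>A\<in>\<A>. w A) \<le> 0" using s1 s2 wU by linarith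
  have "(\<Sum>A\<in>\<A>. w A) = int n * int (card \<A>) - 2 * (\<Sum>A\<in>\<A>. int (card A))"
    unfolding w_def by (simp add: sum_subtractf sum_distrib_left)
  then have i1: "int n * int (card \<A>) \<le> 2 * (\<Sum>A\<in>\<A>. int (card A))" using tot by linarith
  have "int (n * card \<A>) \<le> int (2 * (\<Sum>A\<in>\<A>. card A))"
    using i1 by (simp add: of_nat_sum)
  then have "n * card \<A> \<le> 2 * (\<Sum>A\<in>\<A>. card A)" by (simp only: of_nat_le_iff)
  then have "real (n * card \<A>) \<le> real (2 * (\<Sum>A\<in>\<A>. card A))" by (simp only: of_nat_le_iff)
  then have "real n * real (card \<A>) \<le> 2 * (\<Sum>A\<in>\<A>. real (card A))"
    by (simp add: of_nat_sum)
  moreover have "card \<A> > 0" using fin Uin card_gt_0_iff by blast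
  ultimately show ?thesis by (simp add: field_simps)
qed

end
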